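(* Suppose $\mathcal M$ is stable under regular maps. Let \[1\to P \to G \to Q\to 1\] be a short exact sequence of countable groups. Assume $G$ is equipped with a uniformly discrete proper left-invariant metric, and that each finitely generated subgroup of $P$, equipped with the induced metric belongs to $\mathcal M$, and that $Q$ is equipped with the quotient metric. Then $\overline{\operatorname{asdim}}_{\mathcal M}(G)\leq \operatorname{asdim}(Q)$.
   Context: $\mathcal M$ is a class of metric families (collections of $1$-uniformly discrete bounded geometry metric spaces), stable under regular maps (uniformly Lipschitz maps with uniformly bounded preimage cardinalities); a space $X$ belongs to $\mathcal M$ if $\{X\}\in\mathcal M$. $\operatorname{asdim}$ is the usual asymptotic dimension. $\overline{\operatorname{asdim}}_{\mathcal M}(G)$ is the least $d$ such that for every $r$, $G=X_0\cup\dots\cup X_d$ with each $X_i$ a union of pieces pairwise at distance at least $r$, such that, with $\mathcal Z$ the family of pieces, $N^m_s(\mathcal Z)\in\mathcal M$ for all $m,s\geq1$, where $N^0_s(Z)=Z$ and $N^{k+1}_s(Z)$ is the union of all $Z'\in\mathcal Z$ meeting the closed $s$-neighbourhood of $N^k_s(Z)$. *)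

theory Defs
  imports "HOL-Algebra.Algebra" "HOL-Library.Extended_Nat"
begin

text \<open>A metric space is represented by a carrier set together with a distance function.
  A metric family is a set of such spaces (all with points in the same type).\<close>

type_synonym 'a mspace = "'a set \<times> ('a \<Rightarrow> 'a \<Rightarrow> real)"

definition is_metric :: "'a set \<Rightarrow> ('a \<Rightarrow> 'a \<Rightarrow> real) \<Rightarrow> bool" where
  "is_metric S d \<longleftrightarrow>
     (\<forall>x\<in>S. \<forall>y\<in>S. 0 \<le> d x y \<and> (d x y = 0 \<longleftrightarrow> x = y) \<and> d x y = d y x) \<and>
     (\<forall>x\<in>S. \<forall>y\<in>S. \<forall>z\<in>S. d x z \<le> d x y + d y z)"

definition metric_family :: "'a mspace set \<Rightarrow> bool" where
  "metric_family F \<longleftrightarrow>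
     (\<forall>(S, d)\<in>F. is_metric S d \<and> (\<forall>x\<in>S. \<forall>y\<in>S. x \<noteq> y \<longrightarrow> 1 \<le> d x y)) \<and>
     (\<forall>r::real. \<exists>N::nat. \<forall>(S, d)\<in>F. \<forall>x\<in>S.
        finite {y\<in>S. d x y \<le> r} \<and> card {y\<in>S. d x y \<le> r} \<le> N)"

definition regular_maps_to :: "'a mspace set \<Rightarrow> 'a mspace set \<Rightarrow> bool" where
  "regular_maps_to F' F \<longleftrightarrow>
     (\<exists>L::real. \<exists>K::nat. \<forall>(S, dS)\<in>F'. \<exists>(T, dT)\<in>F. \<exists>f. f ` S \<subseteq> T \<and>
        (\<forall>x\<in>S. \<forall>x'\<in>S. dT (f x) (f x') \<le> L * dS x x') \<and>
        (\<forall>y\<in>T. finite {x\<in>S. f x = y} \<and> card {x\<in>S. f x = y} \<le> K))"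

definition class_of_metric_families :: "('a mspace set \<Rightarrow> bool) \<Rightarrow> bool" where
  "class_of_metric_families \<M> \<longleftrightarrow> (\<forall>F. \<M> F \<longrightarrow> metric_family F)"

definition stable_under_regular_maps :: "('a mspace set \<Rightarrow> bool) \<Rightarrow> bool" where
  "stable_under_regular_maps \<M> \<longleftrightarrow>
     (\<forall>F F'. \<M> F \<longrightarrow> metric_family F' \<longrightarrow> regular_maps_to F' F \<longrightarrow> \<M> F')"

definition space_in :: "('a mspace set \<Rightarrow> bool) \<Rightarrow> 'a set \<Rightarrow> ('a \<Rightarrow> 'a \<Rightarrow> real) \<Rightarrow> bool" where
  "space_in \<M> S d \<longleftrightarrow> \<M> {(S, d)}"

definition r_separated :: "('a \<Rightarrow> 'a \<Rightarrow> real) \<Rightarrow> real \<Rightarrow> 'a set set \<Rightarrow> bool" where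
  "r_separated d r U \<longleftrightarrow>
     (\<forall>A\<in>U. \<forall>B\<in>U. A \<noteq> B \<longrightarrow> (\<forall>a\<in>A. \<forall>b\<in>B. r \<le> d a b))"

definition asdim_le :: "'a set \<Rightarrow> ('a \<Rightarrow> 'a \<Rightarrow> real) \<Rightarrow> nat \<Rightarrow> bool" where
  "asdim_le S d n \<longleftrightarrow>
     (\<forall>r>0. \<exists>U :: nat \<Rightarrow> 'a set set.
        S = (\<Union>i\<le>n. \<Union>(U i)) \<and>
        (\<forall>i\<le>n. r_separated d r (U i)) \<and>
        (\<exists>D. \<forall>i\<le>n. \<forall>A\<in>U i. \<forall>x\<in>A. \<forall>y\<in>A. d x y \<le> D))"

definition asdim :: "'a set \<Rightarrow> ('a \<Rightarrow> 'a \<Rightarrow> real) \<Rightarrow> enat" where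
  "asdim S d = Inf (enat ` {n. asdim_le S d n})"

definition closed_nbhd :: "'a set \<Rightarrow> ('a \<Rightarrow> 'a \<Rightarrow> real) \<Rightarrow> real \<Rightarrow> 'a set \<Rightarrow> 'a set" where
  "closed_nbhd S d s A = {x\<in>S. \<exists>a\<in>A. d x a \<le> s}"

fun iter_nbhd :: "'a set \<Rightarrow> ('a \<Rightarrow> 'a \<Rightarrow> real) \<Rightarrow> 'a set set \<Rightarrow> nat \<Rightarrow> real \<Rightarrow> 'a set \<Rightarrow> 'a set" where
  "iter_nbhd S d Zs 0 s Z = Z"
| "iter_nbhd S d Zs (Suc k) s Z =
     \<Union>{Z'\<in>Zs. Z' \<inter> closed_nbhd S d s (iter_nbhd S d Zs k s Z) \<noteq> {}}"

definition nbhd_family :: "'a set \<Rightarrow> ('a \<Rightarrow> 'a \<Rightarrow> real) \<Rightarrow> 'a set set \<Rightarrow> nat \<Rightarrow> real \<Rightarrow> 'a mspace set" where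
  "nbhd_family S d Zs m s = {(iter_nbhd S d Zs m s Z, d) | Z. Z \<in> Zs}"

definition asdim_M_le :: "('a mspace set \<Rightarrow> bool) \<Rightarrow> 'a set \<Rightarrow> ('a \<Rightarrow> 'a \<Rightarrow> real) \<Rightarrow> nat \<Rightarrow> bool" where
  "asdim_M_le \<M> S d n \<longleftrightarrow>
     (\<forall>r>0. \<exists>U :: nat \<Rightarrow> 'a set set.
        S = (\<Union>i\<le>n. \<Union>(U i)) \<and>
        (\<forall>i\<le>n. r_separated d r (U i)) \<and>
        (\<forall>m::nat. \<forall>s::nat. 1 \<le> m \<longrightarrow> 1 \<le> s \<longrightarrow>
            \<M> (nbhd_family S d (\<Union>i\<le>n. U i) m (real s))))"

definition asdim_M :: "('a mspace set \<Rightarrow> bool) \<Rightarrow> 'a set \<Rightarrow> ('a \<Rightarrow> 'a \<Rightarrow> real) \<Rightarrow> enat" where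
  "asdim_M \<M> S d = Inf (enat ` {n. asdim_M_le \<M> S d n})"

definition uniformly_discrete_proper_left_inv ::
  "('g, 'm) monoid_scheme \<Rightarrow> ('g \<Rightarrow> 'g \<Rightarrow> real) \<Rightarrow> bool" where
  "uniformly_discrete_proper_left_inv G d \<longleftrightarrow>
     is_metric (carrier G) d \<and>
     (\<forall>x\<in>carrier G. \<forall>y\<in>carrier G. x \<noteq> y \<longrightarrow> 1 \<le> d x y) \<and>
     (\<forall>x\<in>carrier G. \<forall>r::real. finite {y\<in>carrier G. d x y \<le> r}) \<and>
     (\<forall>g\<in>carrier G. \<forall>x\<in>carrier G. \<forall>y\<in>carrier G. d (g \<otimes>\<^bsub>G\<^esub> x) (g \<otimes>\<^bsub>G\<^esub> y) = d x y)"

definition quotient_metric ::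
  "('g, 'm) monoid_scheme \<Rightarrow> ('g \<Rightarrow> 'g \<Rightarrow> real) \<Rightarrow> ('g \<Rightarrow> 'q) \<Rightarrow> 'q \<Rightarrow> 'q \<Rightarrow> real" where
  "quotient_metric G d \<phi> q q' =
     Inf {d g g' | g g'. g \<in> carrier G \<and> g' \<in> carrier G \<and> \<phi> g = q \<and> \<phi> g' = q'}"

definition finitely_generated_subgroup :: "('p, 'n) monoid_scheme \<Rightarrow> 'p set \<Rightarrow> bool" where
  "finitely_generated_subgroup P H \<longleftrightarrow>
     (\<exists>S. finite S \<and> S \<subseteq> carrier P \<and> H = generate P S)"

end

theory Submission
  imports Defs
begin


definition conn :: "('a \<Rightarrow> 'a \<Rightarrow> real) \<Rightarrow> real \<Rightarrow> 'a set \<Rightarrow> bool" where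
  "conn d L Y \<longleftrightarrow> (\<forall>Y'. Y' \<subseteq> Y \<longrightarrow> Y' \<noteq> {} \<longrightarrow>
      (\<forall>y\<in>Y'. \<forall>y'\<in>Y. d y y' \<le> L \<longrightarrow> y' \<in> Y') \<longrightarrow> Y' = Y)"

lemma connD:
  assumes "conn d L Y" "Y' \<subseteq> Y" "y0 \<in> Y'"
    "\<And>y y'. y \<in> Y' \<Longrightarrow> y' \<in> Y \<Longrightarrow> d y y' \<le> L \<Longrightarrow> y' \<in> Y'"
  shows "Y \<subseteq> Y'"
  using assms unfolding conn_def by blast

lemma conn_mono: "conn d L Y \<Longrightarrow> L \<le> L' \<Longrightarrow> conn d L' Y"
  unfolding conn_def by (meson order_trans)

lemma iter_sub:
  assumes "\<forall>Z'\<in>Zs. Z' \<subseteq> S" "Z \<subseteq> S"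
  shows "iter_nbhd S d Zs k s Z \<subseteq> S"
  using assms by (induction k) auto

lemma iter_step_sub:
  assumes "\<forall>Z'\<in>Zs. Z' \<noteq> {}" "\<forall>Z'\<in>Zs. Z' \<subseteq> S" "Z \<in> Zs"
    "\<forall>x\<in>S. d x x = 0" "0 \<le> s"
  shows "iter_nbhd S d Zs k s Z \<subseteq> iter_nbhd S d Zs (Suc k) s Z"
proof
  fix y assume y: "y \<in> iter_nbhd S d Zs k s Z"
  have Ysub: "iter_nbhd S d Zs k s Z \<subseteq> S" using iter_sub[of Zs S Z] assms by auto
  obtain Z' where Z': "Z' \<in> Zs" "y \<in> Z'" "Z' \<subseteq> iter_nbhd S d Zs k s Z"
  proof (cases k)
    case 0 then show ?thesis using that y assms by auto
  next
    case (Suc j) then show ?thesis using that y by auto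
  qed
  have "Z' \<inter> closed_nbhd S d s (iter_nbhd S d Zs k s Z) \<noteq> {}"
    using Z' Ysub assms(4,5) y unfolding closed_nbhd_def by force
  then show "y \<in> iter_nbhd S d Zs (Suc k) s Z" using Z' by auto
qed

lemma iter_base_sub:
  assumes "\<forall>Z'\<in>Zs. Z' \<noteq> {}" "\<forall>Z'\<in>Zs. Z' \<subseteq> S" "Z \<in> Zs"
    "\<forall>x\<in>S. d x x = 0" "0 \<le> s"
  shows "Z \<subseteq> iter_nbhd S d Zs k s Z"
proof (induction k)
  case 0 then show ?case by simp
next
  case (Suc k) then show ?case using iter_step_sub[of Zs S Z d s k, OF assms] by simp
qed

lemma iter_conn:
  assumes ne: "\<forall>Z'\<in>Zs. Z' \<noteq> {}" and sub: "\<forall>Z'\<in>Zs. Z' \<subseteq> S" and Z: "Z \<in> Zs"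
    and refl: "\<forall>x\<in>S. d x x = 0" and sym: "\<forall>x\<in>S. \<forall>y\<in>S. d x y = d y x"
    and s: "0 \<le> s" "s \<le> L" and cZ: "\<forall>Z'\<in>Zs. conn d L Z'"
  shows "conn d L (iter_nbhd S d Zs k s Z)"
proof (induction k)
  case 0 then show ?case using cZ Z by simp
next
  case (Suc k)
  let ?N = "iter_nbhd S d Zs k s Z"
  let ?N' = "iter_nbhd S d Zs (Suc k) s Z"
  have NS: "?N \<subseteq> S" using iter_sub[of Zs S Z] sub Z by auto
  have NN': "?N \<subseteq> ?N'" using iter_step_sub[of Zs S Z d s k, OF ne sub Z refl s(1)] .
  have NE: "?N \<noteq> {}" using iter_base_sub[of Zs S Z d s k, OF ne sub Z refl s(1)] ne Z by auto
  show ?case unfolding conn_def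
  proof (intro allI impI)
    fix Y' assume Y'sub: "Y' \<subseteq> ?N'" and Y'ne: "Y' \<noteq> {}"
      and cl: "\<forall>y\<in>Y'. \<forall>y'\<in>?N'. d y y' \<le> L \<longrightarrow> y' \<in> Y'"
    have pieces: "Z' \<subseteq> Y'" if pz: "Z' \<in> Zs" "Z' \<subseteq> ?N'" "Z' \<inter> Y' \<noteq> {}" for Z'
    proof -
      obtain y0 where "y0 \<in> Z' \<inter> Y'" using pz by auto
      have "Z' \<subseteq> Z' \<inter> Y'"
        apply (rule connD[of d L Z' "Z' \<inter> Y'" y0])
        using cZ pz \<open>y0 \<in> Z' \<inter> Y'\<close> cl by (auto simp del: iter_nbhd.simps)
      then show ?thesis by auto
    qed
    obtain y where y: "y \<in> Y'" using Y'ne by auto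
    then obtain Z' where Z': "Z' \<in> Zs" "y \<in> Z'" "Z' \<inter> closed_nbhd S d s ?N \<noteq> {}"
      using Y'sub by (auto dest!: subsetD)
    have Z'sub: "Z' \<subseteq> ?N'" using Z' by auto
    obtain z' w where zw: "z' \<in> Z'" "z' \<in> S" "w \<in> ?N" "d z' w \<le> s"
      using Z'(3) unfolding closed_nbhd_def by auto
    have "Z' \<subseteq> Y'" using pieces[OF Z'(1) Z'sub] y Z'(2) by auto
    then have "z' \<in> Y'" using zw by auto
    then have "w \<in> Y'" using cl zw NN' s by force
    then have "?N \<subseteq> Y' \<inter> ?N"
      apply (intro connD[of d L ?N "Y' \<inter> ?N" w])
      using Suc.IH zw cl NN' by (auto simp del: iter_nbhd.simps)
    then have NY: "?N \<subseteq> Y'" by auto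
    show "Y' = ?N'"
    proof
      show "?N' \<subseteq> Y'"
      proof
        fix u assume "u \<in> ?N'"
        then obtain Z'' where Z'': "Z'' \<in> Zs" "u \<in> Z''" "Z'' \<inter> closed_nbhd S d s ?N \<noteq> {}"
          by (auto dest!: subsetD)
        obtain z'' w'' where zw'': "z'' \<in> Z''" "z'' \<in> S" "w'' \<in> ?N" "d z'' w'' \<le> s"
          using Z''(3) unfolding closed_nbhd_def by auto
        have "Z'' \<subseteq> ?N'" using Z'' by auto
        have "d w'' z'' \<le> L" using sym zw'' NS s by auto
        then have "z'' \<in> Y'" using cl NY zw'' \<open>Z'' \<subseteq> ?N'\<close> by blast
        then have "Z'' \<subseteq> Y'" using pieces[OF Z''(1) \<open>Z'' \<subseteq> ?N'\<close>] zw'' by auto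
        then show "u \<in> Y'" using Z'' by auto
      qed
    qed (use Y'sub in auto)
  qed
qed



lemma (in group) cancel_l1: "x \<in> carrier G \<Longrightarrow> y \<in> carrier G \<Longrightarrow> inv x \<otimes> (x \<otimes> y) = y"
  by (simp add: m_assoc[symmetric])
lemma (in group) cancel_l2: "x \<in> carrier G \<Longrightarrow> y \<in> carrier G \<Longrightarrow> x \<otimes> (inv x \<otimes> y) = y"
  by (simp add: m_assoc[symmetric])

lemma (in group) assoc_cancel4:
  assumes "a \<in> carrier G" "b \<in> carrier G" "c \<in> carrier G" "e \<in> carrier G" "x \<in> carrier G"
  shows "c \<otimes> (a \<otimes> x) \<otimes> (inv x \<otimes> b \<otimes> e) = c \<otimes> (a \<otimes> b) \<otimes> e"
proof -
  have "c \<otimes> (a \<otimes> x) \<otimes> (inv x \<otimes> b \<otimes> e) = c \<otimes> (a \<otimes> (x \<otimes> (inv x \<otimes> (b \<otimes> e))))"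
    using assms by (simp add: m_assoc)
  also have "\<dots> = c \<otimes> (a \<otimes> (b \<otimes> e))" using assms by (simp add: cancel_l2)
  also have "\<dots> = c \<otimes> (a \<otimes> b) \<otimes> e" using assms by (simp add: m_assoc)
  finally show ?thesis .
qed

locale ctx = G: group G + Q: group Q + P: group P
  for G :: "('g, 'b) monoid_scheme" (structure)
  and Q :: "('q, 'c) monoid_scheme" and P :: "('p, 'a) monoid_scheme" +
  fixes \<iota> :: "'p \<Rightarrow> 'g" and \<phi> :: "'g \<Rightarrow> 'q" and d :: "'g \<Rightarrow> 'g \<Rightarrow> real"
  assumes iota_hom: "\<iota> \<in> hom P G" and iota_inj: "inj_on \<iota> (carrier P)"
    and phi_hom: "\<phi> \<in> hom G Q"
    and exact: "\<iota> ` carrier P = kernel G Q \<phi>"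
    and metric: "uniformly_discrete_proper_left_inv G d"
begin

sublocale phi: group_hom G Q \<phi> using phi_hom G.group_axioms Q.group_axioms
  by (simp add: group_hom_axioms_def group_hom_def)
sublocale iota: group_hom P G \<iota> using iota_hom G.group_axioms P.group_axioms
  by (simp add: group_hom_axioms_def group_hom_def)

lemma d_nonneg: "x \<in> carrier G \<Longrightarrow> y \<in> carrier G \<Longrightarrow> 0 \<le> d x y"
  using metric unfolding uniformly_discrete_proper_left_inv_def is_metric_def by blast
lemma d_self: "x \<in> carrier G \<Longrightarrow> d x x = 0"
  using metric unfolding uniformly_discrete_proper_left_inv_def is_metric_def by blast
lemma d_sym: "x \<in> carrier G \<Longrightarrow> y \<in> carrier G \<Longrightarrow> d x y = d y x"
  using metric unfolding uniformly_discrete_proper_left_inv_def is_metric_def by blast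
lemma d_tri: "x \<in> carrier G \<Longrightarrow> y \<in> carrier G \<Longrightarrow> z \<in> carrier G \<Longrightarrow> d x z \<le> d x y + d y z"
  using metric unfolding uniformly_discrete_proper_left_inv_def is_metric_def by blast
lemma d_disc: "x \<in> carrier G \<Longrightarrow> y \<in> carrier G \<Longrightarrow> x \<noteq> y \<Longrightarrow> 1 \<le> d x y"
  using metric unfolding uniformly_discrete_proper_left_inv_def by blast
lemma d_fin: "x \<in> carrier G \<Longrightarrow> finite {y\<in>carrier G. d x y \<le> r}"
  using metric unfolding uniformly_discrete_proper_left_inv_def by blast
lemma d_left: "g \<in> carrier G \<Longrightarrow> x \<in> carrier G \<Longrightarrow> y \<in> carrier G \<Longrightarrow> d (g \<otimes> x) (g \<otimes> y) = d x y"
  using metric unfolding uniformly_discrete_proper_left_inv_def by blast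

lemma d_mult: "w \<in> carrier G \<Longrightarrow> z \<in> carrier G \<Longrightarrow> d w (w \<otimes> z) = d \<one> z"
  using d_left[of w \<one> z] by simp

lemma norm_inv: "c \<in> carrier G \<Longrightarrow> d \<one> (inv c) = d \<one> c"
  using d_left[of c \<one> "inv c"] d_sym[of c \<one>] by simp

lemma d_norm: "y \<in> carrier G \<Longrightarrow> y' \<in> carrier G \<Longrightarrow> d \<one> (inv y \<otimes> y') = d y y'"
  using d_left[of "inv y" y y'] by simp

lemma ball_eq: "x \<in> carrier G \<Longrightarrow>
  {y\<in>carrier G. d x y \<le> r} = (\<lambda>z. x \<otimes> z) ` {z\<in>carrier G. d \<one> z \<le> r}"
proof (safe)
  fix y assume y: "x \<in> carrier G" "y \<in> carrier G" "d x y \<le> r"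
  show "y \<in> (\<lambda>z. x \<otimes> z) ` {z\<in>carrier G. d \<one> z \<le> r}"
    apply (rule image_eqI[of _ _ "inv x \<otimes> y"])
    using y d_norm[of x y] by (auto simp: G.m_assoc[symmetric])
next
  fix z assume "x \<in> carrier G" "z \<in> carrier G" "d \<one> z \<le> r"
  then show "d x (x \<otimes> z) \<le> r" using d_mult by simp
qed auto

lemma ball_card: "x \<in> carrier G \<Longrightarrow>
  card {y\<in>carrier G. d x y \<le> r} = card {z\<in>carrier G. d \<one> z \<le> r}"
  apply (subst ball_eq, assumption)
  apply (rule card_image)
  by (auto simp: inj_on_def)

definition dQ where "dQ = quotient_metric G d \<phi>"

lemma dQ_le: assumes "a \<in> carrier G" "b \<in> carrier G" shows "dQ (\<phi> a) (\<phi> b) \<le> d a b"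
  unfolding dQ_def quotient_metric_def
  apply (rule cInf_lower)
  using assms apply blast
  unfolding bdd_below_def using d_nonneg by blast

definition near :: "real \<Rightarrow> 'g \<Rightarrow> 'g \<Rightarrow> bool" where
  "near E y y' \<longleftrightarrow> (\<exists>g\<in>carrier G. \<exists>g'\<in>carrier G. \<phi> g = \<phi> y \<and> \<phi> g' = \<phi> y' \<and> d g g' \<le> E)"

lemma near_d: "y \<in> carrier G \<Longrightarrow> y' \<in> carrier G \<Longrightarrow> d y y' \<le> E \<Longrightarrow> near E y y'"
  unfolding near_def by blast

lemma near_trans: assumes "near E y y'" "near E' y' y''" shows "near (E + E') y y''"
proof -
  obtain g1 g2 where a: "g1 \<in> carrier G" "g2 \<in> carrier G" "\<phi> g1 = \<phi> y" "\<phi> g2 = \<phi> y'" "d g1 g2 \<le> E"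
    using assms(1) unfolding near_def by blast
  obtain g3 g4 where b: "g3 \<in> carrier G" "g4 \<in> carrier G" "\<phi> g3 = \<phi> y'" "\<phi> g4 = \<phi> y''" "d g3 g4 \<le> E'"
    using assms(2) unfolding near_def by blast
  define h where "h = g2 \<otimes> inv g3 \<otimes> g4"
  have hc: "h \<in> carrier G" using a b h_def by simp
  have "d g2 h = d g3 g4"
    using d_left[of "g2 \<otimes> inv g3" g3 g4] a b unfolding h_def by (simp add: G.m_assoc)
  moreover have "\<phi> h = \<phi> g4"
  proof -
    have eq: "\<phi> g2 = \<phi> g3" using a b by simp
    show ?thesis unfolding h_def using a(2) b(1,2) eq by simp
  qed
  ultimately show ?thesis unfolding near_def using a b hc d_tri[of g1 g2 h]
    by (intro bexI[of _ g1] bexI[of _ h]) auto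
qed

lemma near_sym: assumes "near E y y'" shows "near E y' y"
proof -
  obtain g g' where a: "g \<in> carrier G" "g' \<in> carrier G" "\<phi> g = \<phi> y" "\<phi> g' = \<phi> y'" "d g g' \<le> E"
    using assms unfolding near_def by blast
  then have "d g' g \<le> E" using d_sym[of g g'] by simp
  then show ?thesis unfolding near_def using a by blast
qed

lemma near_dQ: assumes "a \<in> carrier G" "b \<in> carrier G" "dQ (\<phi> a) (\<phi> b) \<le> D"
  shows "near (D + 1) a b"
proof -
  let ?A = "{d g g' | g g'. g \<in> carrier G \<and> g' \<in> carrier G \<and> \<phi> g = \<phi> a \<and> \<phi> g' = \<phi> b}"
  have "Inf ?A < D + 1" using assms(3) unfolding dQ_def quotient_metric_def by linarith
  moreover have "d a b \<in> ?A" using assms(1,2) by blast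
  then have "?A \<noteq> {}" by (rule ex_in_conv[THEN iffD1, OF exI])
  ultimately obtain v where v: "v \<in> ?A" "v < D + 1" using cInf_lessD[of ?A "D+1"] by blast
  then obtain g g' where "g \<in> carrier G" "g' \<in> carrier G" "\<phi> g = \<phi> a" "\<phi> g' = \<phi> b" "d g g' = v"
    by blast
  then show ?thesis unfolding near_def using v(2) by (intro bexI[of _ g] bexI[of _ g']) auto
qed

lemma near_decomp: assumes "x \<in> carrier G" "y \<in> carrier G" "near E x y"
  shows "\<exists>c\<in>carrier G. d \<one> c \<le> E \<and> (\<exists>p\<in>carrier P. inv x \<otimes> y = \<iota> p \<otimes> c)"
proof -
  obtain g g' where a: "g \<in> carrier G" "g' \<in> carrier G" "\<phi> g = \<phi> x" "\<phi> g' = \<phi> y" "d g g' \<le> E"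
    using assms(3) unfolding near_def by blast
  define c where "c = inv g \<otimes> g'"
  have cc: "c \<in> carrier G" using a c_def by simp
  have dc: "d \<one> c \<le> E" using d_norm[of g g'] a c_def by simp
  define t where "t = inv x \<otimes> y \<otimes> inv c"
  have tc: "t \<in> carrier G" using t_def cc assms by simp
  have ic: "inv c = inv g' \<otimes> g" using a by (simp add: c_def G.inv_mult_group)
  have p1: "\<phi> (inv c) = inv\<^bsub>Q\<^esub> (\<phi> y) \<otimes>\<^bsub>Q\<^esub> \<phi> x" using a by (simp add: ic)
  have p2: "\<phi> (inv x \<otimes> y) = inv\<^bsub>Q\<^esub> (\<phi> x) \<otimes>\<^bsub>Q\<^esub> \<phi> y" using assms by simp
  have "\<phi> t = \<phi> (inv x \<otimes> y) \<otimes>\<^bsub>Q\<^esub> \<phi> (inv c)" unfolding t_def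
    using assms cc phi.hom_mult[of "inv x \<otimes> y" "inv c"] by simp
  also have "\<dots> = inv\<^bsub>Q\<^esub> (\<phi> x) \<otimes>\<^bsub>Q\<^esub> (\<phi> y \<otimes>\<^bsub>Q\<^esub> (inv\<^bsub>Q\<^esub> (\<phi> y) \<otimes>\<^bsub>Q\<^esub> \<phi> x))"
    unfolding p1 p2 using assms by (simp add: Q.m_assoc)
  also have "\<dots> = \<one>\<^bsub>Q\<^esub>" using assms by (simp add: Q.cancel_l2)
  finally have "t \<in> kernel G Q \<phi>" using tc unfolding kernel_def by simp
  then have "t \<in> \<iota> ` carrier P" using exact by simp
  then obtain p where p: "p \<in> carrier P" "\<iota> p = t" by (elim imageE) simp
  have "inv x \<otimes> y = t \<otimes> c" unfolding t_def using cc assms by (simp add: G.m_assoc)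
  then show ?thesis using p cc dc by blast
qed

definition Sg :: "real \<Rightarrow> 'p set" where "Sg R = {p \<in> carrier P. d \<one> (\<iota> p) \<le> R}"
definition Fb :: "real \<Rightarrow> 'g set" where "Fb E = {c \<in> carrier G. d \<one> c \<le> E}"

lemma Sg_fin: "finite (Sg R)"
proof -
  have "\<iota> ` Sg R \<subseteq> {y\<in>carrier G. d \<one> y \<le> R}" unfolding Sg_def by auto
  moreover have "inj_on \<iota> (Sg R)" using iota_inj unfolding Sg_def by (auto intro: inj_on_subset)
  ultimately show ?thesis using inj_on_finite[of \<iota> "Sg R"] d_fin[of \<one> R] G.one_closed by simp
qed

lemma Fb_fin: "finite (Fb E)" unfolding Fb_def using d_fin[of \<one> E] by simp

lemma main_cover:
  assumes Y: "Y \<subseteq> carrier G" "conn d L Y" "x \<in> Y" "\<forall>y\<in>Y. near E x y" "0 \<le> E"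
  shows "\<forall>y\<in>Y. \<exists>k\<in>generate P (Sg (L + 2*E)). \<exists>c\<in>Fb E. y = x \<otimes> \<iota> k \<otimes> c"
proof -
  let ?H = "generate P (Sg (L + 2*E))"
  have Hsub: "subgroup ?H P" using P.generate_is_subgroup[of "Sg (L + 2*E)"] unfolding Sg_def by auto
  let ?Y' = "{y\<in>Y. \<exists>k\<in>?H. \<exists>c\<in>Fb E. y = x \<otimes> \<iota> k \<otimes> c}"
  have xc: "x \<in> carrier G" using Y by auto
  have "Y \<subseteq> ?Y'"
  proof (rule connD[OF Y(2), of ?Y' x])
    show "x \<in> ?Y'"
      apply (simp add: Y(3))
      apply (rule bexI[of _ "\<one>\<^bsub>P\<^esub>"])
       apply (rule bexI[of _ \<one>])
      using xc Y(5) d_self[of \<one>] Hsub subgroup.one_closed[OF Hsub] by (auto simp: Fb_def)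
  next
    fix y y' assume yY: "y \<in> ?Y'" and y'Y: "y' \<in> Y" and dyy: "d y y' \<le> L"
    then obtain k c where kc: "k \<in> ?H" "c \<in> Fb E" "y = x \<otimes> \<iota> k \<otimes> c" by blast
    have kP: "k \<in> carrier P" using kc Hsub subgroup.subset by blast
    have cG: "c \<in> carrier G" and dc: "d \<one> c \<le> E" using kc unfolding Fb_def by auto
    have yG: "y \<in> carrier G" "y' \<in> carrier G" using yY y'Y Y by auto
    obtain c' p' where cp: "c' \<in> carrier G" "d \<one> c' \<le> E" "p' \<in> carrier P" "inv x \<otimes> y' = \<iota> p' \<otimes> c'"
      using near_decomp[OF xc yG(2)] Y(4) y'Y by blast
    define q where "q = inv\<^bsub>P\<^esub> k \<otimes>\<^bsub>P\<^esub> p'"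
    have qP: "q \<in> carrier P" using q_def kP cp by simp
    have ip': "\<iota> p' = inv x \<otimes> y' \<otimes> inv c'"
    proof -
      have "\<iota> p' = \<iota> p' \<otimes> c' \<otimes> inv c'" using cp by (simp add: G.m_assoc)
      also have "\<dots> = inv x \<otimes> y' \<otimes> inv c'" by (simp only: cp(4))
      finally show ?thesis .
    qed
    have ik: "\<iota> k = inv x \<otimes> y \<otimes> inv c" using kc xc cG kP by (simp add: G.m_assoc G.cancel_l1)
    have "\<iota> q = inv (\<iota> k) \<otimes> \<iota> p'" unfolding q_def using kP cp by simp
    also have "\<dots> = c \<otimes> (inv y \<otimes> y') \<otimes> inv c'"
    proof -
      have i1: "inv (inv x \<otimes> y \<otimes> inv c) = c \<otimes> (inv y \<otimes> x)"
        using xc yG cG by (simp only: G.inv_mult_group G.inv_inv G.m_closed G.inv_closed)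
      have e1: "c \<otimes> (inv y \<otimes> x) \<otimes> (inv x \<otimes> y' \<otimes> inv c') = c \<otimes> (inv y \<otimes> y') \<otimes> inv c'"
        by (rule G.assoc_cancel4) (use xc yG cG cp(1) in auto)
      have e2: "inv (\<iota> k) = c \<otimes> (inv y \<otimes> x)" using ik i1 by (rule ssubst)
      have e3: "inv (\<iota> k) \<otimes> \<iota> p' = c \<otimes> (inv y \<otimes> x) \<otimes> (inv x \<otimes> y' \<otimes> inv c')"
        using e2 ip' by (rule arg_cong2[where f="(\<otimes>)"])
      show ?thesis using e3 e1 by (rule trans)
    qed
    finally have iq: "\<iota> q = c \<otimes> (inv y \<otimes> y') \<otimes> inv c'" .
    have "d \<one> (\<iota> q) \<le> d \<one> c + d c (c \<otimes> (inv y \<otimes> y')) + d (c \<otimes> (inv y \<otimes> y')) (c \<otimes> (inv y \<otimes> y') \<otimes> inv c')"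
    proof -
      have m1: "c \<otimes> (inv y \<otimes> y') \<in> carrier G" using cG yG by simp
      have m2: "c \<otimes> (inv y \<otimes> y') \<otimes> inv c' \<in> carrier G" using cG yG cp by simp
      show ?thesis unfolding iq
        using d_tri[OF G.one_closed cG m2] d_tri[OF cG m1 m2] by linarith
    qed
    also have "\<dots> = d \<one> c + d y y' + d \<one> c'"
    proof -
      have "d c (c \<otimes> (inv y \<otimes> y')) = d y y'"
        using d_mult[of c "inv y \<otimes> y'"] d_norm[of y y'] cG yG by simp
      moreover have "d (c \<otimes> (inv y \<otimes> y')) (c \<otimes> (inv y \<otimes> y') \<otimes> inv c') = d \<one> c'"
        using d_mult[of "c \<otimes> (inv y \<otimes> y')" "inv c'"] norm_inv[of c'] cG yG cp(1) by simp
      ultimately show ?thesis by simp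
    qed
    also have "\<dots> \<le> L + 2 * E" using dc dyy cp(2) by simp
    finally have "q \<in> Sg (L + 2*E)" using qP unfolding Sg_def by simp
    then have "q \<in> ?H" by (rule generate.incl)
    then have "k \<otimes>\<^bsub>P\<^esub> q \<in> ?H" by (rule subgroup.m_closed[OF Hsub kc(1)])
    moreover have "k \<otimes>\<^bsub>P\<^esub> q = p'" unfolding q_def using kP cp(3) by (simp add: P.m_assoc[symmetric])
    ultimately have "p' \<in> ?H" by simp
    moreover have "y' = x \<otimes> \<iota> p' \<otimes> c'"
    proof -
      have "y' = x \<otimes> (inv x \<otimes> y')" using G.cancel_l2[OF xc yG(2)] by simp
      also have "\<dots> = x \<otimes> (\<iota> p' \<otimes> c')" by (simp only: cp(4))
      finally show ?thesis using xc cp(1,3) by (simp add: G.m_assoc)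
    qed
    ultimately show "y' \<in> ?Y'" using y'Y cp(1,2) unfolding Fb_def by blast
  qed auto
  then show ?thesis by blast
qed

end


context ctx begin

lemma near_mono: "near E y y' \<Longrightarrow> E \<le> E' \<Longrightarrow> near E' y y'"
  unfolding near_def by (meson order_trans)

lemma near_iter:
  assumes sub: "\<forall>Z'\<in>Zs. Z' \<subseteq> carrier G" and nz: "\<forall>Z\<in>Zs. \<forall>a\<in>Z. \<forall>b\<in>Z. near E0 a b"
    and s: "0 \<le> s" and Z: "Z \<in> Zs" and x: "x \<in> Z"
  shows "\<forall>y\<in>iter_nbhd (carrier G) d Zs k s Z. near (E0 + real k * (s + E0)) x y"
proof (induction k)
  case 0 then show ?case using nz Z x by simp
next
  case (Suc k)
  show ?case
  proof
    fix y assume "y \<in> iter_nbhd (carrier G) d Zs (Suc k) s Z"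
    then obtain Z' where Z': "Z' \<in> Zs" "y \<in> Z'"
      "Z' \<inter> closed_nbhd (carrier G) d s (iter_nbhd (carrier G) d Zs k s Z) \<noteq> {}"
      by auto
    then obtain z' w where zw: "z' \<in> Z'" "z' \<in> carrier G" "w \<in> iter_nbhd (carrier G) d Zs k s Z" "d z' w \<le> s"
      unfolding closed_nbhd_def by auto
    have wG: "w \<in> carrier G" using zw(3) iter_sub[of Zs "carrier G" Z d k s] sub Z by auto
    have n1: "near (E0 + real k * (s + E0)) x w" using Suc.IH zw(3) by blast
    have n2: "near s w z'" using near_d[OF wG zw(2)] d_sym[OF wG zw(2)] zw(4) by simp
    have n3: "near E0 z' y" using nz Z'(1,2) zw(1) by blast
    have "near (E0 + real k * (s + E0) + s + E0) x y"
      using near_trans[OF near_trans[OF n1 n2] n3] .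
    moreover have "E0 + real k * (s + E0) + s + E0 = E0 + real (Suc k) * (s + E0)"
      by (simp add: algebra_simps)
    ultimately show "near (E0 + real (Suc k) * (s + E0)) x y" by simp
  qed
qed

lemma regular_piece:
  assumes Y: "Y \<subseteq> carrier G" and xG: "x \<in> carrier G" and HP: "H \<subseteq> carrier P" and E: "0 \<le> E"
    and dec: "\<forall>y\<in>Y. \<exists>k\<in>H. \<exists>c\<in>Fb E. y = x \<otimes> \<iota> k \<otimes> c"
  shows "\<exists>f. f ` Y \<subseteq> \<iota> ` H \<and> (\<forall>y\<in>Y. \<forall>y'\<in>Y. d (f y) (f y') \<le> (2*E+1) * d y y') \<and>
     (\<forall>t\<in>\<iota> ` H. finite {y\<in>Y. f y = t} \<and> card {y\<in>Y. f y = t} \<le> card (Fb E))"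
proof -
  obtain kf where kf: "\<forall>y\<in>Y. kf y \<in> H \<and> (\<exists>c\<in>Fb E. y = x \<otimes> \<iota> (kf y) \<otimes> c)"
  proof -
    have "\<forall>y\<in>Y. \<exists>k. k \<in> H \<and> (\<exists>c\<in>Fb E. y = x \<otimes> \<iota> k \<otimes> c)" using dec by blast
    from bchoice[OF this] show ?thesis using that by blast
  qed
  obtain cf where cf: "\<forall>y\<in>Y. cf y \<in> Fb E \<and> y = x \<otimes> \<iota> (kf y) \<otimes> cf y"
    using bchoice[of Y "\<lambda>y c. c \<in> Fb E \<and> y = x \<otimes> \<iota> (kf y) \<otimes> c"] kf by blast
  define f where "f y = \<iota> (kf y)" for y
  have fH: "f ` Y \<subseteq> \<iota> ` H" unfolding f_def using kf by auto
  have lip: "d (f y) (f y') \<le> (2*E+1) * d y y'" if yy: "y \<in> Y" "y' \<in> Y" for y y'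
  proof (cases "y = y'")
    case True
    then show ?thesis using f_def d_self[of "\<iota> (kf y)"] d_nonneg[of y y'] Y yy kf HP E
      by (simp add: subset_iff)
  next
    case False
    have yG: "y \<in> carrier G" "y' \<in> carrier G" using Y yy by auto
    have kP: "kf y \<in> carrier P" "kf y' \<in> carrier P" using kf yy HP by auto
    have cG: "cf y \<in> carrier G" "cf y' \<in> carrier G" "d \<one> (cf y) \<le> E" "d \<one> (cf y') \<le> E"
      using cf yy unfolding Fb_def by auto
    define a where "a = x \<otimes> \<iota> (kf y)"
    define b where "b = x \<otimes> \<iota> (kf y')"
    have ab: "a \<in> carrier G" "b \<in> carrier G" unfolding a_def b_def using xG kP by auto
    have ya: "y = a \<otimes> cf y" "y' = b \<otimes> cf y'" unfolding a_def b_def using cf yy by auto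
    have 1: "d (f y) (f y') = d a b" unfolding f_def a_def b_def using d_left[of x "\<iota> (kf y)" "\<iota> (kf y')"] xG kP by simp
    have 2: "d a b \<le> d a y + d y y' + d y' b" using d_tri[of a y b] d_tri[of y y' b] ab yG by linarith
    have 3: "d a y \<le> E" using d_mult[of a "cf y"] ab cG ya by simp
    have 4: "d y' b \<le> E" using d_mult[of b "cf y'"] d_sym[of b y'] ab cG ya yG by simp
    have 5: "1 \<le> d y y'" using d_disc[OF yG False] .
    have "d (f y) (f y') \<le> 2 * E + d y y'" using 1 2 3 4 by linarith
    also have "\<dots> \<le> (2*E+1) * d y y'" using 5 E
      by (simp add: algebra_simps) (metis mult_left_mono mult.right_neutral add_le_cancel_left mult_2 add_mono order_refl)
    finally show ?thesis .
  qed
  have pre: "finite {y\<in>Y. f y = t} \<and> card {y\<in>Y. f y = t} \<le> card (Fb E)" for t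
  proof -
    let ?A = "{y\<in>Y. f y = t}"
    have inj: "inj_on cf ?A"
    proof (rule inj_onI)
      fix y y' assume "y \<in> ?A" "y' \<in> ?A" "cf y = cf y'"
      then have "kf y = kf y' \<or> \<iota> (kf y) = \<iota> (kf y')" unfolding f_def by auto
      then show "y = y'" using cf \<open>y \<in> ?A\<close> \<open>y' \<in> ?A\<close> \<open>cf y = cf y'\<close> by (metis (no_types, lifting) mem_Collect_eq)
    qed
    have img: "cf ` ?A \<subseteq> Fb E" using cf by auto
    show ?thesis using inj_on_finite[OF inj img Fb_fin] card_inj_on_le[OF inj img Fb_fin] by simp
  qed
  show ?thesis using fH lip pre by blast
qed

lemma metric_family_sub:
  assumes "\<forall>(S, dS)\<in>F. S \<subseteq> carrier G \<and> dS = d"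
  shows "metric_family F"
  unfolding metric_family_def
proof (intro conjI allI)
  show "\<forall>(S, dS)\<in>F. is_metric S dS \<and> (\<forall>x\<in>S. \<forall>y\<in>S. x \<noteq> y \<longrightarrow> 1 \<le> dS x y)"
  proof (clarify)
    fix S dS assume "(S, dS) \<in> F"
    then have S: "S \<subseteq> carrier G" "dS = d" using assms by auto
    have "is_metric S d" unfolding is_metric_def
      using S(1) d_nonneg d_self d_sym d_tri d_disc by (smt (verit) subsetD)
    moreover have "\<forall>x\<in>S. \<forall>y\<in>S. x \<noteq> y \<longrightarrow> 1 \<le> d x y" using S d_disc by blast
    ultimately show "is_metric S dS \<and> (\<forall>x\<in>S. \<forall>y\<in>S. x \<noteq> y \<longrightarrow> 1 \<le> dS x y)" using S by simp
  qed
next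
  fix r :: real
  show "\<exists>N. \<forall>(S, dS)\<in>F. \<forall>x\<in>S. finite {y \<in> S. dS x y \<le> r} \<and> card {y \<in> S. dS x y \<le> r} \<le> N"
  proof (rule exI[of _ "card {z\<in>carrier G. d \<one> z \<le> r}"], clarify)
    fix S dS x assume "(S, dS) \<in> F" "x \<in> S"
    then have S: "S \<subseteq> carrier G" "dS = d" "x \<in> carrier G" using assms by auto
    have sub: "{y \<in> S. d x y \<le> r} \<subseteq> {y\<in>carrier G. d x y \<le> r}" using S by auto
    have fin: "finite {y\<in>carrier G. d x y \<le> r}" using d_fin[OF S(3)] .
    show "finite {y \<in> S. dS x y \<le> r} \<and> card {y \<in> S. dS x y \<le> r} \<le> card {z\<in>carrier G. d \<one> z \<le> r}"
      using finite_subset[OF sub fin] card_mono[OF fin sub] ball_card[OF S(3), of r] S(2) by simp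
  qed
qed

lemma M_nbhd:
  fixes M :: "'g mspace set \<Rightarrow> bool"
  assumes stab: "stable_under_regular_maps M"
    and fg: "\<And>H. subgroup H P \<Longrightarrow> finitely_generated_subgroup P H \<Longrightarrow> space_in M (\<iota> ` H) d"
    and ne: "\<forall>Z'\<in>Zs. Z' \<noteq> {}" and sub: "\<forall>Z'\<in>Zs. Z' \<subseteq> carrier G"
    and cz: "\<forall>Z\<in>Zs. conn d L Z" and nz: "\<forall>Z\<in>Zs. \<forall>a\<in>Z. \<forall>b\<in>Z. near E0 a b"
    and E0: "0 \<le> E0" and s: "0 \<le> s" "s \<le> L"
  shows "M (nbhd_family (carrier G) d Zs m s)"
proof -
  define E where "E = E0 + real m * (s + E0)"
  define H where "H = generate P (Sg (L + 2*E))"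
  have E: "0 \<le> E" unfolding E_def using E0 s by simp
  have SgP: "Sg (L + 2*E) \<subseteq> carrier P" unfolding Sg_def by auto
  have Hsub: "subgroup H P" unfolding H_def using P.generate_is_subgroup[OF SgP] .
  have HP: "H \<subseteq> carrier P" using subgroup.subset[OF Hsub] .
  have "finitely_generated_subgroup P H"
    unfolding finitely_generated_subgroup_def H_def using Sg_fin SgP by blast
  then have MF: "M {(\<iota> ` H, d)}" using fg[OF Hsub] unfolding space_in_def by simp
  have refl: "\<forall>x\<in>carrier G. d x x = 0" using d_self by blast
  have sym: "\<forall>x\<in>carrier G. \<forall>y\<in>carrier G. d x y = d y x" using d_sym by blast
  have dec: "\<exists>x\<in>carrier G. \<forall>y\<in>iter_nbhd (carrier G) d Zs m s Z. \<exists>k\<in>H. \<exists>c\<in>Fb E. y = x \<otimes> \<iota> k \<otimes> c"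
    if Z: "Z \<in> Zs" for Z
  proof -
    obtain x where x: "x \<in> Z" using ne Z by blast
    let ?Y = "iter_nbhd (carrier G) d Zs m s Z"
    have YG: "?Y \<subseteq> carrier G" using iter_sub[of Zs "carrier G" Z d m s] sub Z by blast
    have Yc: "conn d L ?Y" using iter_conn[OF ne sub Z refl sym s cz] .
    have xY: "x \<in> ?Y" using iter_base_sub[of Zs "carrier G" Z d s m, OF ne sub Z refl s(1)] x by blast
    have nY: "\<forall>y\<in>?Y. near E x y" using near_iter[OF sub nz s(1) Z x, of m] unfolding E_def .
    have "\<forall>y\<in>?Y. \<exists>k\<in>H. \<exists>c\<in>Fb E. y = x \<otimes> \<iota> k \<otimes> c"
      using main_cover[OF YG Yc xY nY E] unfolding H_def .
    then show ?thesis using x sub Z by blast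
  qed
  have reg: "regular_maps_to (nbhd_family (carrier G) d Zs m s) {(\<iota> ` H, d)}"
    unfolding regular_maps_to_def
  proof (rule exI[of _ "2*E+1"], rule exI[of _ "card (Fb E)"], clarify)
    fix S dS assume "(S, dS) \<in> nbhd_family (carrier G) d Zs m s"
    then obtain Z where Z: "Z \<in> Zs" "S = iter_nbhd (carrier G) d Zs m s Z" "dS = d"
      unfolding nbhd_family_def by blast
    obtain x where x: "x \<in> carrier G" "\<forall>y\<in>S. \<exists>k\<in>H. \<exists>c\<in>Fb E. y = x \<otimes> \<iota> k \<otimes> c"
      using dec[OF Z(1)] Z(2) by blast
    have SG: "S \<subseteq> carrier G" using iter_sub[of Zs "carrier G" Z d m s] sub Z by blast
    obtain f where f: "f ` S \<subseteq> \<iota> ` H" "\<forall>y\<in>S. \<forall>y'\<in>S. d (f y) (f y') \<le> (2*E+1) * d y y'"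
      "\<forall>t\<in>\<iota> ` H. finite {y\<in>S. f y = t} \<and> card {y\<in>S. f y = t} \<le> card (Fb E)"
      using regular_piece[OF SG x(1) HP E x(2)] by blast
    show "\<exists>(T, dT)\<in>{(\<iota> ` H, d)}. \<exists>f. f ` S \<subseteq> T \<and>
            (\<forall>x\<in>S. \<forall>x'\<in>S. dT (f x) (f x') \<le> (2 * E + 1) * dS x x') \<and>
            (\<forall>y\<in>T. finite {x \<in> S. f x = y} \<and> card {x \<in> S. f x = y} \<le> card (Fb E))"
      using f Z(3) by blast
  qed
  have mf: "metric_family (nbhd_family (carrier G) d Zs m s)"
  proof (rule metric_family_sub, clarify)
    fix S dS assume "(S, dS) \<in> nbhd_family (carrier G) d Zs m s"
    then obtain Z where Z: "Z \<in> Zs" "S = iter_nbhd (carrier G) d Zs m s Z" "dS = d"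
      unfolding nbhd_family_def by blast
    then show "S \<subseteq> carrier G \<and> dS = d" using iter_sub[of Zs "carrier G" Z d m s] sub by blast
  qed
  show ?thesis using stab MF mf reg unfolding stable_under_regular_maps_def by blast
qed

end


context ctx begin

lemma main_le:
  fixes M :: "'g mspace set \<Rightarrow> bool"
  assumes stab: "stable_under_regular_maps M"
    and fg: "\<And>H. subgroup H P \<Longrightarrow> finitely_generated_subgroup P H \<Longrightarrow> space_in M (\<iota> ` H) d"
    and asd: "asdim_le (carrier Q) dQ n"
  shows "asdim_M_le M (carrier G) d n"
  unfolding asdim_M_le_def
proof (intro allI impI)
  fix r :: real assume r: "r > 0"
  obtain V D where V: "carrier Q = (\<Union>i\<le>n. \<Union>(V i))" "\<forall>i\<le>n. r_separated dQ r (V i)"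
    "\<forall>i\<le>n. \<forall>A\<in>V i. \<forall>x\<in>A. \<forall>y\<in>A. dQ x y \<le> D"
    using asd[unfolded asdim_le_def, rule_format, OF r] by (elim exE conjE) (rule that)
  define D' where "D' = max D 0"
  define Gi where "Gi i = {x\<in>carrier G. \<phi> x \<in> \<Union>(V i)}" for i
  define R where "R i = {(a, b). a \<in> Gi i \<and> b \<in> Gi i \<and> d a b < r}" for i
  define comp where "comp i x = (R i)\<^sup>* `` {x}" for i x
  define U where "U i = {comp i x | x. x \<in> Gi i}" for i
  have GiG: "Gi i \<subseteq> carrier G" for i unfolding Gi_def by auto
  have sameA: "A = B" if "i \<le> n" "A \<in> V i" "B \<in> V i" "a \<in> carrier G" "\<phi> a \<in> A" "\<phi> a \<in> B" for i A B a
  proof (rule ccontr)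
    assume "A \<noteq> B"
    then have "r \<le> dQ (\<phi> a) (\<phi> a)" using V(2) that unfolding r_separated_def by blast
    moreover have "dQ (\<phi> a) (\<phi> a) \<le> 0" using dQ_le[of a a] d_self[of a] that(4) by simp
    ultimately show False using r by simp
  qed
  have F2: "b \<in> Gi i \<and> (\<exists>A\<in>V i. \<phi> a \<in> A \<and> \<phi> b \<in> A)"
    if "i \<le> n" "a \<in> Gi i" "(a, b) \<in> (R i)\<^sup>*" for i a b
    using that(3)
  proof (induction rule: rtrancl_induct)
    case base then show ?case using that(2) unfolding Gi_def by auto
  next
    case (step b c)
    obtain A where A: "A \<in> V i" "\<phi> a \<in> A" "\<phi> b \<in> A" using step.IH by blast
    have bc: "b \<in> Gi i" "c \<in> Gi i" "d b c < r" using step.hyps(2) unfolding R_def by auto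
    obtain B where B: "B \<in> V i" "\<phi> c \<in> B" using bc(2) unfolding Gi_def by auto
    have "A = B"
    proof (rule ccontr)
      assume "A \<noteq> B"
      then have "r \<le> dQ (\<phi> b) (\<phi> c)" using V(2) that(1) A B unfolding r_separated_def by blast
      moreover have "dQ (\<phi> b) (\<phi> c) \<le> d b c" using dQ_le bc GiG by blast
      ultimately show False using bc(3) by simp
    qed
    then show ?case using A B bc by auto
  qed
  have symR: "sym (R i)" for i unfolding R_def sym_def Gi_def by (auto simp: d_sym)
  have comp_eq: "comp i b = comp i a" if "b \<in> comp i a" for i a b
  proof -
    have ab: "(a, b) \<in> (R i)\<^sup>*" using that comp_def by auto
    have ba: "(b, a) \<in> (R i)\<^sup>*" using ab sym_rtrancl[OF symR] unfolding sym_def by blast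
    show ?thesis unfolding comp_def using ab ba rtrancl_trans[of _ _ "R i"] by blast
  qed
  have x_comp: "x \<in> comp i x" for i x unfolding comp_def by simp
  have comp_sub: "comp i x \<subseteq> Gi i" if "i \<le> n" "x \<in> Gi i" for i x
    using F2[OF that] unfolding comp_def by blast
  have comp_conn: "conn d r (comp i x)" for i x
    unfolding conn_def
  proof (intro allI impI)
    fix Y' assume Y': "Y' \<subseteq> comp i x" "Y' \<noteq> {}" "\<forall>y\<in>Y'. \<forall>y'\<in>comp i x. d y y' \<le> r \<longrightarrow> y' \<in> Y'"
    obtain y0 where y0: "y0 \<in> Y'" using Y'(2) by blast
    have ceq: "comp i y0 = comp i x" using comp_eq Y'(1) y0 by blast
    have "z \<in> Y'" if "(y0, z) \<in> (R i)\<^sup>*" for z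
      using that
    proof (induction rule: rtrancl_induct)
      case base then show ?case using y0 .
    next
      case (step a b)
      have "b \<in> comp i x" using ceq step.hyps unfolding comp_def by (metis Image_singleton_iff rtrancl.rtrancl_into_rtrancl)
      moreover have "d a b \<le> r" using step.hyps(2) unfolding R_def by auto
      ultimately show ?case using Y'(3) step.IH by blast
    qed
    then have "comp i x \<subseteq> Y'" using ceq unfolding comp_def by blast
    then show "Y' = comp i x" using Y'(1) by blast
  qed
  have comp_near: "near (D' + 1) a b" if tt: "i \<le> n" "x \<in> Gi i" "a \<in> comp i x" "b \<in> comp i x" for i x a b
  proof -
    obtain A where A: "A \<in> V i" "\<phi> x \<in> A" "\<phi> a \<in> A" using F2[OF tt(1,2)] tt(3) unfolding comp_def by blast
    obtain B where B: "B \<in> V i" "\<phi> x \<in> B" "\<phi> b \<in> B" using F2[OF tt(1,2)] tt(4) unfolding comp_def by blast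
    have "A = B" using sameA[OF tt(1) A(1) B(1) _ A(2) B(2)] tt(2) GiG by blast
    then have "dQ (\<phi> a) (\<phi> b) \<le> D" using V(3) tt(1) A B by blast
    then have "dQ (\<phi> a) (\<phi> b) \<le> D'" unfolding D'_def by simp
    moreover have "a \<in> carrier G" "b \<in> carrier G" using comp_sub[OF tt(1,2)] tt(3,4) GiG by blast+
    ultimately show ?thesis using near_dQ by blast
  qed
  have cover: "carrier G = (\<Union>i\<le>n. \<Union>(U i))"
  proof
    show "carrier G \<subseteq> (\<Union>i\<le>n. \<Union>(U i))"
    proof
      fix x assume xG: "x \<in> carrier G"
      then have "\<phi> x \<in> carrier Q" by simp
      then obtain i where i: "i \<le> n" "\<phi> x \<in> \<Union>(V i)" using V(1) by blast
      then have "x \<in> Gi i" using xG unfolding Gi_def by blast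
      then have "comp i x \<in> U i" unfolding U_def by blast
      then show "x \<in> (\<Union>i\<le>n. \<Union>(U i))" using x_comp i(1) by blast
    qed
  next
    show "(\<Union>i\<le>n. \<Union>(U i)) \<subseteq> carrier G"
    proof
      fix y assume "y \<in> (\<Union>i\<le>n. \<Union>(U i))"
      then obtain i x where "i \<le> n" "x \<in> Gi i" "y \<in> comp i x" unfolding U_def by blast
      then show "y \<in> carrier G" using comp_sub GiG by blast
    qed
  qed
  have rsep: "\<forall>i\<le>n. r_separated d r (U i)"
  proof (intro allI impI)
    fix i assume i: "i \<le> n"
    show "r_separated d r (U i)" unfolding r_separated_def
    proof (intro ballI impI)
      fix A B a' b' assume AB: "A \<in> U i" "B \<in> U i" "A \<noteq> B" "a' \<in> A" "b' \<in> B"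
      obtain a where a: "a \<in> Gi i" "A = comp i a" using AB(1) unfolding U_def by blast
      obtain b where b: "b \<in> Gi i" "B = comp i b" using AB(2) unfolding U_def by blast
      show "r \<le> d a' b'"
      proof (rule ccontr)
        assume "\<not> r \<le> d a' b'"
        moreover have "a' \<in> Gi i" "b' \<in> Gi i" using comp_sub[OF i] a b AB(4,5) by blast+
        ultimately have "(a', b') \<in> R i" unfolding R_def by auto
        then have "b' \<in> comp i a'" unfolding comp_def by auto
        then have "comp i b' = comp i a'" using comp_eq by blast
        moreover have "comp i a' = A" using comp_eq a AB(4) by blast
        moreover have "comp i b' = B" using comp_eq b AB(5) by blast
        ultimately show False using AB(3) by simp
      qed
    qed
  qed
  define Zs where "Zs = (\<Union>i\<le>n. U i)"
  have ne: "\<forall>Z'\<in>Zs. Z' \<noteq> {}" unfolding Zs_def U_def using x_comp by blast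
  have sub: "\<forall>Z'\<in>Zs. Z' \<subseteq> carrier G" unfolding Zs_def U_def using comp_sub GiG by blast
  have cz: "\<forall>Z\<in>Zs. conn d r Z" unfolding Zs_def U_def using comp_conn by blast
  have nz: "\<forall>Z\<in>Zs. \<forall>a\<in>Z. \<forall>b\<in>Z. near (D' + 1) a b" unfolding Zs_def U_def using comp_near by blast
  have D'0: "0 \<le> D' + 1" unfolding D'_def by simp
  have allM: "\<forall>m s::nat. 1 \<le> m \<longrightarrow> 1 \<le> s \<longrightarrow> M (nbhd_family (carrier G) d (\<Union>i\<le>n. U i) m (real s))"
  proof (intro allI impI)
    fix m s :: nat assume "1 \<le> m" "1 \<le> s"
    have cz': "\<forall>Z\<in>Zs. conn d (max r (real s)) Z" using cz conn_mono by (metis max.cobounded1)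
    show "M (nbhd_family (carrier G) d (\<Union>i\<le>n. U i) m (real s))"
      using M_nbhd[OF stab fg ne sub cz' nz D'0, of "real s" m] unfolding Zs_def by simp
  qed
  show "\<exists>U. carrier G = (\<Union>i\<le>n. \<Union>(U i)) \<and> (\<forall>i\<le>n. r_separated d r (U i)) \<and>
          (\<forall>m s. 1 \<le> m \<longrightarrow> 1 \<le> s \<longrightarrow> M (nbhd_family (carrier G) d (\<Union>i\<le>n. U i) m (real s)))"
    using cover rsep allM by blast
qed

end

theorem proposition2p9:
  fixes \<M> :: "'g mspace set \<Rightarrow> bool"
    and P :: "('p, 'a) monoid_scheme"
    and G :: "('g, 'b) monoid_scheme"
    and Q :: "('q, 'c) monoid_scheme"
    and \<iota> :: "'p \<Rightarrow> 'g" and \<phi> :: "'g \<Rightarrow> 'q"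
    and d :: "'g \<Rightarrow> 'g \<Rightarrow> real"
  assumes M_class: "class_of_metric_families \<M>"
    and M_stable: "stable_under_regular_maps \<M>"
    and grpP: "group P" and grpG: "group G" and grpQ: "group Q"
    and cntP: "countable (carrier P)" and cntG: "countable (carrier G)"
    and cntQ: "countable (carrier Q)"
    and iota_hom: "\<iota> \<in> hom P G" and iota_inj: "inj_on \<iota> (carrier P)"
    and phi_hom: "\<phi> \<in> hom G Q" and phi_surj: "\<phi> ` carrier G = carrier Q"
    and exact: "\<iota> ` carrier P = kernel G Q \<phi>"
    and metric: "uniformly_discrete_proper_left_inv G d"
    and fg_in_M: "\<And>H. subgroup H P \<Longrightarrow> finitely_generated_subgroup P H \<Longrightarrow>
                     space_in \<M> (\<iota> ` H) d"
  shows "asdim_M \<M> (carrier G) d \<le> asdim (carrier Q) (quotient_metric G d \<phi>)"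
proof -
  have c: "ctx G Q P \<iota> \<phi> d"
    unfolding ctx_def ctx_axioms_def using grpG grpQ grpP iota_hom iota_inj phi_hom exact metric by blast
  interpret ctx G Q P \<iota> \<phi> d by (rule c)
  have "{n. asdim_le (carrier Q) (quotient_metric G d \<phi>) n} \<subseteq> {n. asdim_M_le \<M> (carrier G) d n}"
    using main_le[OF M_stable fg_in_M] unfolding dQ_def by blast
  then show ?thesis unfolding asdim_M_def asdim_def by (intro Inf_superset_mono image_mono)
qed

end
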